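(* Let $\phi\in C^4(\mathbb{R})$ be a profile function of a graph-like forward self-similar solution to the planar surface diffusion flow, i.e. $\phi$ satisfies $$\frac{\phi(x_1) - x_1\phi'(x_1)}{4\,v(x_1)} = -\frac{1}{v}\frac{d}{dx_1}\Big(\frac{1}{v}\frac{dk}{dx_1}\Big)\quad\text{for all }x_1\in\mathbb{R},$$ where $v=\sqrt{1+(\phi')^2}$ and $k = \phi''/v^3$. Suppose there are constants $\alpha,\beta\in\mathbb{R}$ such that $$\phi(0)\,\phi(x_1) \le \alpha\, s(x_1) + \beta\quad\text{for all }x_1\in\mathbb{R},$$ where $s(x_1)=\int_0^{x_1} v(z)\,dz$. Then $\phi(x_1) = c x_1$ for some $c\in\mathbb{R}$.
   Context: The displayed equation is the two-dimensional form $\frac{x\cdot\mathbf{n}}{4} = -\partial_s^2 k$ of the profile equation for the curve $\Gamma_*=\{(x_1,\phi(x_1))\}$ with upward unit normal $\mathbf{n}=(-\phi',1)/v$, curvature $k=\phi''/v^3$, and arc-length derivative $\partial_s = v^{-1}\partial_{x_1}$; $\Gamma_t=t^{1/4}\Gamma_*$ then solves $V=-\partial_s^2 k$. *)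

theory Defs
  imports "HOL-Analysis.Analysis"
begin

definition C4 :: "(real \<Rightarrow> real) \<Rightarrow> bool" where
  "C4 phi \<longleftrightarrow> (\<forall>k<4. \<forall>x. ((deriv ^^ k) phi) differentiable (at x))
                 \<and> continuous_on UNIV ((deriv ^^ 4) phi)"

definition vfun :: "(real \<Rightarrow> real) \<Rightarrow> real \<Rightarrow> real" where
  "vfun phi x = sqrt (1 + (deriv phi x)^2)"

definition curv :: "(real \<Rightarrow> real) \<Rightarrow> real \<Rightarrow> real" where
  "curv phi x = deriv (deriv phi) x / (vfun phi x)^3"

definition arclen :: "(real \<Rightarrow> real) \<Rightarrow> real \<Rightarrow> real" where
  "arclen phi x = (if 0 \<le> x then integral {0..x} (vfun phi) else - integral {x..0} (vfun phi))"

definition profile_eq :: "(real \<Rightarrow> real) \<Rightarrow> bool" where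
  "profile_eq phi \<longleftrightarrow> (\<forall>x. (phi x - x * deriv phi x) / (4 * vfun phi x)
      = - (1 / vfun phi x) * deriv (\<lambda>y. (1 / vfun phi y) * deriv (curv phi) y) x)"

end

theory Submission
  imports Defs
begin

lemma alg: fixes V K P Q f x :: real
  assumes "V > 0" "V^2 = 1 + P^2"
  shows "V*K*K + (x*P - f)*(Q/V^3)/4 + (((1 + (P*P + Q*f))*V*4 - (x+f*P)*(P*Q)*4/V)/(V*V) - V*4)/16 = V*K^2"
proof -
  have V: "V \<noteq> 0" using assms by simp
  have E: "(((1 + (P*P + Q*f))*V*4 - (x+f*P)*(P*Q)*4/V)/(V*V) - V*4) = 4 * (f - x*P)*Q/V^3"
    using V assms(2) apply (simp add: field_simps)
    apply algebra
    done
  have Z: "(x*P - f)*(Q/V^3)/4 + (4 * (f - x*P)*Q/V^3)/16 = 0"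
    using V by (simp add: field_simps)
  show ?thesis unfolding E using Z by (simp add: power2_eq_square)
qed

lemma noblow:
  fixes T k :: "real \<Rightarrow> real"
  assumes dT: "\<And>x. (T has_real_derivative k x) (at x)" and Tb: "\<And>x. \<bar>T x\<bar> < 1"
    and big: "\<And>y. a \<le> y \<Longrightarrow> y \<le> a + 3 \<Longrightarrow> 1 \<le> (k y)^2"
  shows False
proof -
  obtain z where z: "a < z" "z < a+3" "T (a+3) - T a = (a + 3 - a) * k z"
    using MVT2[of a "a+3" T k] dT by auto
  have "1 \<le> (k z)^2" using big[of z] z by simp
  hence "1 \<le> \<bar>k z\<bar>" by (metis abs_square_less_1 not_less)
  hence "3 \<le> \<bar>T (a+3) - T a\<bar>" using z(3) by (simp add: abs_mult)
  moreover have "\<bar>T (a+3) - T a\<bar> < 2" using Tb[of a] Tb[of "a+3"] by linarith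
  ultimately show False by linarith
qed

lemma mono_deriv:
  fixes g g' :: "real \<Rightarrow> real"
  assumes "\<And>x. (g has_real_derivative g' x) (at x)" "\<And>x. 0 \<le> g' x" "a \<le> b"
  shows "g a \<le> g b"
proof (cases "a = b")
  case False
  hence "a < b" using assms(3) by simp
  then obtain z where z: "g b - g a = (b - a) * g' z" using MVT2[of a b g g'] assms(1) by auto
  have "0 \<le> (b - a) * g' z" using assms(2)[of z] \<open>a < b\<close> by simp
  thus ?thesis using z by simp
qed simp

lemma cs: fixes a b c :: real shows "a + b*c \<le> sqrt (a^2+b^2) * sqrt (1+c^2)"
proof -
  have "(a + b*c)^2 \<le> (a^2+b^2) * (1+c^2)"
  proof -
    have "(a^2+b^2) * (1+c^2) - (a + b*c)^2 = (a*c - b)^2" by (simp add: power2_eq_square algebra_simps)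
    thus ?thesis by (metis diff_ge_0_iff_ge zero_le_power2)
  qed
  hence "a + b*c \<le> sqrt ((a^2+b^2) * (1+c^2))" by (rule real_le_rsqrt)
  thus ?thesis by (simp add: real_sqrt_mult)
qed


lemma lin_aux: fixes X D S P M Q A :: real
  shows "X + D \<le> S \<Longrightarrow> D = P - 2*M + Q \<Longrightarrow> 0 \<le> Q \<Longrightarrow> M \<le> A \<Longrightarrow> X + P - S \<le> 2*A"
  by linarith

lemma core:
  fixes phi p1 p2 v k ks s :: "real \<Rightarrow> real" and \<alpha> \<beta> :: real
  assumes d0: "\<And>x. (phi has_real_derivative p1 x) (at x)"
    and d1: "\<And>x. (p1 has_real_derivative p2 x) (at x)"
    and dv: "\<And>x. (v has_real_derivative p1 x * p2 x / v x) (at x)"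
    and dk: "\<And>x. (k has_real_derivative v x * ks x) (at x)"
    and dks: "\<And>x. (ks has_real_derivative - (phi x - x * p1 x) / 4) (at x)"
    and ds: "\<And>x. (s has_real_derivative v x) (at x)"
    and vdef: "\<And>x. v x = sqrt (1 + (p1 x)^2)"
    and kdef: "\<And>x. k x = p2 x / (v x)^3"
    and s0: "s 0 = 0"
    and hyp: "\<And>x. phi 0 * phi x \<le> \<alpha> * s x + \<beta>"
  shows "phi x - x * p1 x = 0"
proof -
  have vsq: "\<And>x. (v x)^2 = 1 + (p1 x)^2" using vdef by (simp add: add_pos_nonneg)
  have vge: "\<And>x. 1 \<le> v x" using vdef by simp
  have vpos: "\<And>x. 0 < v x" using vge by (meson less_le_trans zero_less_one)
  define T where "T x = p1 x / v x" for x
  have dT: "\<And>x. (T has_real_derivative k x) (at x)"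
    unfolding T_def
    apply (auto intro!: derivative_eq_intros d1 dv)
    subgoal for x using vpos[of x] by simp
    subgoal for x unfolding kdef using vpos[of x] vsq[of x] apply (simp add: field_simps)
      apply algebra done
    done
  have Tb: "\<And>x. \<bar>T x\<bar> < 1"
  proof -
    fix x
    have "\<bar>p1 x\<bar>^2 < (v x)^2" using vsq[of x] by simp
    hence "\<bar>p1 x\<bar> < v x" using vpos[of x] by (meson less_le power_less_imp_less_base)
    thus "\<bar>T x\<bar> < 1" unfolding T_def using vpos[of x] by (simp add: abs_div)
  qed
  have chord: "\<And>x. x^2 + (phi x - phi 0)^2 \<le> (s x)^2"
  proof -
    fix x
    define d where "d = phi x - phi 0"
    define N where "N = sqrt (x^2 + d^2)"
    have N0: "0 \<le> N" by (simp add: N_def)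
    have NN: "N^2 = x^2 + d^2" by (simp add: N_def)
    show "x^2 + (phi x - phi 0)^2 \<le> (s x)^2"
    proof (cases "0 \<le> x")
      case True
      define g where "g y = N * s y - x * y - d * (phi y - phi 0)" for y
      have dg: "\<And>y. (g has_real_derivative N * v y - x - d * p1 y) (at y)"
        unfolding g_def by (auto intro!: derivative_eq_intros ds d0)
      have gp: "\<And>y. 0 \<le> N * v y - x - d * p1 y"
      proof -
        fix y
        have "x + d * p1 y \<le> sqrt (x^2+d^2) * sqrt (1 + (p1 y)^2)" by (rule cs)
        thus "0 \<le> N * v y - x - d * p1 y" unfolding N_def vdef by simp
      qed
      have "g 0 \<le> g x" by (rule mono_deriv[OF dg gp True])
      hence "N^2 \<le> N * s x" unfolding g_def using s0 NN by (simp add: d_def power2_eq_square)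
      hence "N * N \<le> N * s x" by (simp add: power2_eq_square)
      hence "N \<le> s x \<or> N = 0" using N0 by (metis less_eq_real_def mult_le_cancel_left_pos)
      thus ?thesis
      proof
        assume "N \<le> s x"
        hence "N^2 \<le> (s x)^2" using N0 by (rule power_mono)
        thus ?thesis using NN d_def by simp
      next
        assume "N = 0" thus ?thesis using NN d_def by (metis zero_le_power2 power_zero_numeral)
      qed
    next
      case False
      define g where "g y = N * s y + x * y + d * (phi y - phi 0)" for y
      have dg: "\<And>y. (g has_real_derivative N * v y + x + d * p1 y) (at y)"
        unfolding g_def by (auto intro!: derivative_eq_intros ds d0)
      have gp: "\<And>y. 0 \<le> N * v y + x + d * p1 y"
      proof -
        fix y
        have "(-x) + (-d) * p1 y \<le> sqrt ((-x)^2+(-d)^2) * sqrt (1 + (p1 y)^2)" by (rule cs)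
        thus "0 \<le> N * v y + x + d * p1 y" unfolding N_def vdef by simp
      qed
      have "g x \<le> g 0" by (rule mono_deriv[OF dg gp]) (use False in simp)
      hence "N * s x \<le> -(N^2)" unfolding g_def using s0 NN by (simp add: d_def power2_eq_square)
      hence "N * s x \<le> N * (- N)" by (simp add: power2_eq_square)
      hence "s x \<le> - N \<or> N = 0" using N0 by (metis less_eq_real_def mult_le_cancel_left_pos)
      thus ?thesis
      proof
        assume "s x \<le> - N"
        hence "N \<le> - s x" by simp
        hence "N^2 \<le> (-(s x))^2" using N0 by (rule power_mono)
        thus ?thesis using NN d_def by simp
      next
        assume "N = 0" thus ?thesis using NN d_def by (metis zero_le_power2 power_zero_numeral)
      qed
    qed
  qed
  define h where "h x = (k x)^2/2 + (x^2 + (phi x)^2 - (s x)^2)/8 - \<alpha> * s x / 4" for x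
  define q where "q x = k x * ks x + ((x + phi x * p1 x)/v x - s x - \<alpha>)/4" for x
  have dh: "\<And>x. (h has_real_derivative v x * q x) (at x)"
    unfolding h_def q_def
    apply (auto intro!: derivative_eq_intros dk ds d0)
    subgoal for x using vpos[of x] by (simp add: field_simps)
    done
  have dq: "\<And>x. (q has_real_derivative v x * (ks x)^2) (at x)"
    unfolding q_def
    apply (auto intro!: derivative_eq_intros dk ds d0 d1 dv dks)
    subgoal for x using vpos[of x] by simp
    subgoal for x unfolding kdef apply (rule alg) using vpos vsq by auto
    done
  have kb: "\<And>x. 2 * h x - \<beta>/2 \<le> (k x)^2"
  proof -
    fix x
    have c: "x^2 + (phi x - phi 0)^2 \<le> (s x)^2" by (rule chord)
    have e: "(phi x - phi 0)^2 = (phi x)^2 - 2 * (phi 0 * phi x) + (phi 0)^2" by (simp add: power2_eq_square algebra_simps)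
    have "0 \<le> (phi 0)^2" by simp
    hence m: "x^2 + (phi x)^2 - (s x)^2 \<le> 2 * (\<alpha> * s x + \<beta>)" by (rule lin_aux[OF c e _ hyp[of x]])
    show "2 * h x - \<beta>/2 \<le> (k x)^2" unfolding h_def using m by (simp add: field_simps)
  qed
  have qmono: "\<And>a b. a \<le> b \<Longrightarrow> q a \<le> q b"
    by (rule mono_deriv[OF dq]) (simp add: vpos less_imp_le)
  have q0: "\<And>x. q x = 0"
  proof (rule ccontr)
    fix x1 assume "q x1 \<noteq> 0"
    then consider "q x1 > 0" | "q x1 < 0" by linarith
    thus False
    proof cases
      case 1
      define \<delta> where "\<delta> = q x1"
      have dpos: "0 < \<delta>" using 1 by (simp add: \<delta>_def)
      have hlow: "\<And>y. x1 \<le> y \<Longrightarrow> h x1 + \<delta> * (y - x1) \<le> h y"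
      proof -
        fix y assume y: "x1 \<le> y"
        show "h x1 + \<delta> * (y - x1) \<le> h y"
        proof (cases "x1 = y")
          case False
          hence "x1 < y" using y by simp
          then obtain z where z: "x1 < z" "h y - h x1 = (y - x1) * (v z * q z)"
            using MVT2[of x1 y h "\<lambda>x. v x * q x"] dh by auto
          have "\<delta> \<le> q z" using qmono[of x1 z] z(1) by (simp add: \<delta>_def)
          hence "1 * \<delta> \<le> v z * q z" using vge[of z] dpos by (intro mult_mono) auto
          hence "(y - x1) * \<delta> \<le> (y - x1) * (v z * q z)" using y by (intro mult_left_mono) auto
          thus ?thesis using z(2) by (simp add: algebra_simps)
        qed simp
      qed
      define a where "a = x1 + \<bar>1 + \<beta>/2 - 2 * h x1\<bar> / (2 * \<delta>)"
      show False
      proof (rule noblow[OF dT Tb, of a])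
        fix y assume y: "a \<le> y" "y \<le> a + 3"
        have ax: "x1 \<le> a" unfolding a_def using dpos by simp
        have "\<bar>1 + \<beta>/2 - 2 * h x1\<bar> = 2 * \<delta> * (a - x1)" unfolding a_def using dpos by simp
        moreover have "2 * \<delta> * (a - x1) \<le> 2 * \<delta> * (y - x1)" using y dpos by simp
        moreover have "h x1 + \<delta> * (y - x1) \<le> h y" using hlow[of y] ax y by simp
        ultimately show "1 \<le> (k y)^2" using kb[of y] by linarith
      qed
    next
      case 2
      define \<delta> where "\<delta> = - q x1"
      have dpos: "0 < \<delta>" using 2 by (simp add: \<delta>_def)
      have hlow: "\<And>y. y \<le> x1 \<Longrightarrow> h x1 + \<delta> * (x1 - y) \<le> h y"
      proof -
        fix y assume y: "y \<le> x1"
        show "h x1 + \<delta> * (x1 - y) \<le> h y"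
        proof (cases "x1 = y")
          case False
          hence "y < x1" using y by simp
          then obtain z where z: "z < x1" "h x1 - h y = (x1 - y) * (v z * q z)"
            using MVT2[of y x1 h "\<lambda>x. v x * q x"] dh by auto
          have qz: "q z \<le> - \<delta>" using qmono[of z x1] z(1) by (simp add: \<delta>_def)
          have "v z * q z \<le> 1 * q z" using vge[of z] qz dpos by (intro mult_right_mono_neg) auto
          hence "v z * q z \<le> - \<delta>" using qz by simp
          hence "(x1 - y) * (v z * q z) \<le> (x1 - y) * (- \<delta>)" using y by (intro mult_left_mono) auto
          thus ?thesis using z(2) by (simp add: algebra_simps)
        qed simp
      qed
      define a where "a = x1 - \<bar>1 + \<beta>/2 - 2 * h x1\<bar> / (2 * \<delta>) - 3"
      show False
      proof (rule noblow[OF dT Tb, of a])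
        fix y assume y: "a \<le> y" "y \<le> a + 3"
        have ax: "a + 3 \<le> x1" unfolding a_def using dpos by simp
        have "\<bar>1 + \<beta>/2 - 2 * h x1\<bar> = 2 * \<delta> * (x1 - (a + 3))" unfolding a_def using dpos by simp
        moreover have "2 * \<delta> * (x1 - (a+3)) \<le> 2 * \<delta> * (x1 - y)" using y dpos by simp
        moreover have "h x1 + \<delta> * (x1 - y) \<le> h y" using hlow[of y] ax y by simp
        ultimately show "1 \<le> (k y)^2" using kb[of y] by linarith
      qed
    qed
  qed
  have ks0: "\<And>x. ks x = 0"
  proof -
    fix x
    have "q = (\<lambda>_. 0)" using q0 by auto
    hence "(q has_real_derivative 0) (at x)" by simp
    hence "v x * (ks x)^2 = 0" using DERIV_unique dq by blast
    thus "ks x = 0" using vpos[of x] by simp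
  qed
  have "ks = (\<lambda>_. 0)" using ks0 by auto
  hence "(ks has_real_derivative 0) (at x)" by simp
  hence "- (phi x - x * p1 x) / 4 = 0" using DERIV_unique dks by blast
  thus ?thesis by simp
qed

lemma arclen_deriv:
  assumes cf: "continuous_on UNIV f"
  shows "((\<lambda>x. if 0 \<le> x then integral {0..x} f else - integral {x..0} (f::real\<Rightarrow>real)) has_real_derivative f x) (at x)"
proof -
  define a where "a = - (\<bar>x\<bar> + 1)"
  define b where "b = \<bar>x\<bar> + 1"
  have cab: "continuous_on {a..b} f" using cf continuous_on_subset by blast
  have "((\<lambda>y. integral {a..y} f) has_real_derivative f x) (at x within {a..b})"
    by (rule integral_has_real_derivative[OF cab]) (auto simp: a_def b_def)
  moreover have "x \<in> interior {a..b}" by (auto simp: a_def b_def)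
  ultimately have d1: "((\<lambda>y. integral {a..y} f) has_real_derivative f x) (at x)"
    using at_within_interior[of x "{a..b}"] by metis
  hence d2: "((\<lambda>y. integral {a..y} f - integral {a..0} f) has_real_derivative f x) (at x)"
    using DERIV_diff[OF d1 DERIV_const, of "integral {a..0} f"] by simp
  show ?thesis
  proof (rule has_field_derivative_transform_within_open[OF d2, of "{a<..}"])
    show "open {a<..}" by simp
    show "x \<in> {a<..}" by (auto simp: a_def)
    fix y :: real assume y: "y \<in> {a<..}"
    have int: "\<And>c d. f integrable_on {c..d}"
      by (rule integrable_continuous_interval) (use cf continuous_on_subset in blast)
    show "integral {a..y} f - integral {a..0} f = (if 0 \<le> y then integral {0..y} f else - integral {y..0} f)"
    proof (cases "0 \<le> y")
      case True
      have "a \<le> 0" by (simp add: a_def)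
      from Henstock_Kurzweil_Integration.integral_combine[OF this True int] True show ?thesis by simp
    next
      case False
      have "a \<le> y" using y by simp
      from Henstock_Kurzweil_Integration.integral_combine[OF this _ int, of 0] False show ?thesis by simp
    qed
  qed
qed

lemma c4_derivs:
  fixes phi :: "real \<Rightarrow> real"
  assumes "C4 phi"
  shows "\<And>x. (phi has_real_derivative deriv phi x) (at x)"
    "\<And>x. (deriv phi has_real_derivative deriv (deriv phi) x) (at x)"
    "\<And>x. (deriv (deriv phi) has_real_derivative deriv (deriv (deriv phi)) x) (at x)"
    "\<And>x. deriv (deriv (deriv phi)) differentiable (at x)"
proof -
  have C: "\<forall>k<4. \<forall>x. ((deriv ^^ k) phi) differentiable (at x)" using assms C4_def by auto
  fix x
  show "(phi has_real_derivative deriv phi x) (at x)"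
    using C[rule_format, of 0 x] by (simp add: DERIV_deriv_iff_real_differentiable)
  show "(deriv phi has_real_derivative deriv (deriv phi) x) (at x)"
    using C[rule_format, of 1 x] by (simp add: DERIV_deriv_iff_real_differentiable)
  show "(deriv (deriv phi) has_real_derivative deriv (deriv (deriv phi)) x) (at x)"
    using C[rule_format, of 2 x] by (simp add: DERIV_deriv_iff_real_differentiable eval_nat_numeral)
  show "deriv (deriv (deriv phi)) differentiable (at x)"
    using C[rule_format, of 3 x] by (simp add: eval_nat_numeral)
qed

lemma DERIV_eq: "(f has_real_derivative a) F \<Longrightarrow> a = b \<Longrightarrow> (f has_real_derivative b) F" by simp

lemma dsqrt:
  fixes p1 p2 :: "real \<Rightarrow> real"
  assumes "(p1 has_real_derivative p2 x) (at x)"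
  shows "((\<lambda>y. sqrt (1 + (p1 y)^2)) has_real_derivative (p1 x * p2 x / sqrt (1 + (p1 x)^2))) (at x)"
proof -
  have pos: "0 < 1 + (p1 x)^2" by (simp add: add_pos_nonneg)
  have d1: "((\<lambda>y. (p1 y)^2) has_real_derivative (2 * p1 x * p2 x)) (at x)"
    by (rule DERIV_eq[OF DERIV_power[OF assms, of 2]]) (simp add: algebra_simps)
  have d2: "((\<lambda>y. 1 + (p1 y)^2) has_real_derivative (2 * p1 x * p2 x)) (at x)"
    using DERIV_add[OF DERIV_const d1, of 1] by simp
  have d3: "((\<lambda>y. sqrt (1 + (p1 y)^2)) has_real_derivative inverse (sqrt (1 + (p1 x)^2)) / 2 * (2 * p1 x * p2 x)) (at x)"
    by (rule DERIV_chain2[OF _ d2], rule DERIV_real_sqrt, rule pos)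
  then show ?thesis by (simp add: field_simps)
qed


theorem theorem3p2:
  fixes phi :: "real \<Rightarrow> real" and \<alpha> \<beta> :: real
  assumes "C4 phi"
    and "profile_eq phi"
    and "\<forall>x. phi 0 * phi x \<le> \<alpha> * arclen phi x + \<beta>"
  shows "\<exists>c::real. \<forall>x. phi x = c * x"
proof -
  define p1 where "p1 = deriv phi"
  define p2 where "p2 = deriv p1"
  define p3 where "p3 = deriv p2"
  define p4 where "p4 = deriv p3"
  note cd = c4_derivs[OF assms(1), folded p1_def, folded p2_def, folded p3_def]
  have d0: "\<And>x. (phi has_real_derivative p1 x) (at x)" by (rule cd(1))
  have d1: "\<And>x. (p1 has_real_derivative p2 x) (at x)" by (rule cd(2))
  have d2: "\<And>x. (p2 has_real_derivative p3 x) (at x)" by (rule cd(3))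
  have d3: "\<And>x. (p3 has_real_derivative p4 x) (at x)"
    unfolding p4_def using cd(4) by (simp add: DERIV_deriv_iff_real_differentiable)
  define v where "v = vfun phi"
  have vdef: "\<And>x. v x = sqrt (1 + (p1 x)^2)" by (simp add: v_def vfun_def p1_def)
  have vfun_eq: "v = (\<lambda>x. sqrt (1 + (p1 x)^2))" using vdef by auto
  have dv: "\<And>x. (v has_real_derivative p1 x * p2 x / v x) (at x)"
    unfolding vfun_eq by (rule dsqrt[OF d1])
  have vpos: "\<And>x. 0 < v x" using vdef by (simp add: add_pos_nonneg)
  have vne: "\<And>x. v x \<noteq> 0" using vpos by (metis less_irrefl)
  define k where "k = curv phi"
  have kdef: "\<And>x. k x = p2 x / (v x)^3" by (simp add: k_def curv_def v_def p2_def p1_def)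
  have k_eq: "k = (\<lambda>x. p2 x / (v x)^3)" using kdef by auto
  define K1 where "K1 x = (p3 x * (v x)^3 - p2 x * (3 * (v x)^2 * (p1 x * p2 x / v x))) / ((v x)^3 * (v x)^3)" for x
  have dK: "\<And>x. (k has_real_derivative K1 x) (at x)"
    unfolding k_eq K1_def
    by (auto intro!: derivative_eq_intros d2 dv simp: vne)
  have derk: "deriv k = K1" using dK DERIV_imp_deriv by blast
  define ks where "ks = (\<lambda>y. 1 / vfun phi y * deriv (curv phi) y)"
  have ks_eq: "ks = (\<lambda>y. 1 / v y * K1 y)" unfolding ks_def v_def[symmetric] k_def[symmetric] derk ..
  have ksd: "\<And>x. \<exists>D. (ks has_real_derivative D) (at x)"
    unfolding ks_eq K1_def
    by (rule exI) (auto intro!: derivative_eq_intros d1 d2 d3 dv simp: vne)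
  have dks: "\<And>x. (ks has_real_derivative - (phi x - x * p1 x) / 4) (at x)"
  proof -
    fix x
    obtain D where D: "(ks has_real_derivative D) (at x)" using ksd by blast
    have "deriv ks x = D" using D by (rule DERIV_imp_deriv)
    moreover have "(phi x - x * p1 x) / (4 * v x) = - (1 / v x) * deriv ks x"
      using assms(2) unfolding profile_eq_def ks_def v_def p1_def by blast
    ultimately have E: "phi x * v x + D * (v x * 4) = x * (p1 x * v x)" using vpos[of x] by (simp add: field_simps)
    hence "(phi x + D * 4) * v x = (x * p1 x) * v x" by (simp add: algebra_simps)
    hence "phi x + D * 4 = x * p1 x" using vne[of x] by simp
    hence Deq: "D = - (phi x - x * p1 x) / 4" by simp
    show "(ks has_real_derivative - (phi x - x * p1 x) / 4) (at x)" using D Deq by metis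
  qed
  have dk: "\<And>x. (k has_real_derivative v x * ks x) (at x)"
    using dK unfolding ks_eq using vne by simp
  define s where "s = arclen phi"
  have cv: "continuous_on UNIV v"
    using dv by (meson DERIV_isCont continuous_at_imp_continuous_on)
  have s_eq: "s = (\<lambda>x. if 0 \<le> x then integral {0..x} v else - integral {x..0} v)"
    by (auto simp: s_def arclen_def v_def)
  have ds: "\<And>x. (s has_real_derivative v x) (at x)"
    unfolding s_eq by (rule arclen_deriv[OF cv])
  have s0: "s 0 = 0" by (simp add: s_eq)
  have hyp: "\<And>x. phi 0 * phi x \<le> \<alpha> * s x + \<beta>" using assms(3) by (simp add: s_def)
  have lin: "\<And>x. phi x - x * p1 x = 0"
    by (rule core[OF d0 d1 dv dk dks ds vdef kdef s0 hyp])
  have phi_eq: "phi = (\<lambda>x. x * p1 x)" using lin by (auto simp: algebra_simps)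
  have p2z: "\<And>x. x \<noteq> 0 \<Longrightarrow> p2 x = 0"
  proof -
    fix x :: real assume x: "x \<noteq> 0"
    have "((\<lambda>x. x * p1 x) has_real_derivative 1 * p1 x + x * p2 x) (at x)"
      by (auto intro!: derivative_eq_intros d1)
    hence "(phi has_real_derivative p1 x + x * p2 x) (at x)" using phi_eq by simp
    hence "p1 x + x * p2 x = p1 x" using DERIV_unique d0 by blast
    thus "p2 x = 0" using x by simp
  qed
  have p20: "p2 0 = 0"
  proof -
    have "isCont p2 0" using d2 by (rule DERIV_isCont)
    hence t1: "(p2 \<longlongrightarrow> p2 0) (at 0)" by (simp add: isCont_def)
    have t2: "(p2 \<longlongrightarrow> 0) (at (0::real))"
      by (rule LIM_equal2[where g="\<lambda>_. 0" and R=1]) (auto simp: p2z)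
    show ?thesis using LIM_unique[OF t1 t2] .
  qed
  have "\<forall>x. (p1 has_real_derivative 0) (at x)"
  proof
    fix x show "(p1 has_real_derivative 0) (at x)"
      using d1[of x] p2z[of x] p20 by (cases "x = 0") auto
  qed
  hence "\<And>x. p1 x = p1 0" using DERIV_isconst_all by blast
  hence "\<forall>x. phi x = p1 0 * x" using lin by (metis mult.commute eq_iff_diff_eq_0)
  thus ?thesis by blast
qed

end
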